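(* Let $m, n \in \mathbb N$, let $\mathcal M \subset M_m$ be a real vector subspace, and let $\phi \colon \mathcal M \to M_n$ be a real linear map such that $\phi(\mathcal M \cap \mathcal U_m) \subset \mathcal U_n$. Then for all $U, V \in \mathcal M \cap \mathcal U_m$: if $\operatorname{Re}(U^\ast V) = 0_m$, then $\operatorname{Re}(\phi(U)^\ast\phi(V)) = 0_n$.
   Context: $M_m$ is the set of $m\times m$ complex matrices, $\mathcal U_m$ the unitary ones, and $\operatorname{Re}A = \tfrac12(A+A^\ast)$. *)

theory Defs
  imports "HOL-Analysis.Analysis"
begin

text \<open>Complex m x m matrices are rendered as complex ^ 'm ^ 'm (m = CARD('m)).\<close>

definition cadj :: "complex ^ 'n ^ 'm \<Rightarrow> complex ^ 'm ^ 'n" where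
  "cadj A = (\<chi> i j. cnj (A $ j $ i))"

definition unitary_mat :: "complex ^ 'n ^ 'n \<Rightarrow> bool" where
  "unitary_mat U \<longleftrightarrow> cadj U ** U = mat 1 \<and> U ** cadj U = mat 1"

definition re_mat :: "complex ^ 'n ^ 'n \<Rightarrow> complex ^ 'n ^ 'n" where
  "re_mat A = (1/2 :: real) *\<^sub>R (A + cadj A)"

end

theory Submission
  imports Defs
begin

lemma cadj_add: "cadj (A + B) = cadj A + cadj B"
  by (simp add: cadj_def vec_eq_iff)

lemma cadj_scaleR: "cadj (c *\<^sub>R A) = c *\<^sub>R cadj A"
  by (simp add: cadj_def vec_eq_iff complex_cnj_scaleR)

lemma cadj_cadj: "cadj (cadj A) = A"
  by (simp add: cadj_def vec_eq_iff)

lemma cadj_mult: "cadj ((A::complex^'n^'m) ** (B::complex^'k^'n)) = cadj B ** cadj A"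
  by (simp add: cadj_def vec_eq_iff matrix_matrix_mult_def mult.commute)

lemma scaleR_mult_left: "((c::real) *\<^sub>R (A::complex^'n^'m)) ** (B::complex^'k^'n) = c *\<^sub>R (A ** B)"
  by (simp add: vec_eq_iff matrix_matrix_mult_def scaleR_sum_right)

lemma scaleR_mult_right: "(A::complex^'n^'m) ** ((c::real) *\<^sub>R (B::complex^'k^'n)) = c *\<^sub>R (A ** B)"
  by (simp add: vec_eq_iff matrix_matrix_mult_def scaleR_sum_right)

lemma matrix_add_rdistrib: "((B::'a::semiring_1^'n^'m) + C) ** A = B ** A + C ** A"
  by (vector matrix_matrix_mult_def sum.distrib[symmetric] field_simps)

lemma key:
  fixes U V :: "complex^'n^'n"
  assumes "cadj U ** U = mat 1" "cadj V ** V = mat 1"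
  shows "cadj (U + V) ** (U + V) = (2::real) *\<^sub>R mat 1 + (cadj U ** V + cadj V ** U)"
proof -
  have "cadj (U + V) ** (U + V) = cadj U ** U + cadj V ** V + (cadj U ** V + cadj V ** U)"
    unfolding cadj_add matrix_add_ldistrib matrix_add_rdistrib by (simp only: add_ac)
  also have "\<dots> = (2::real) *\<^sub>R mat 1 + (cadj U ** V + cadj V ** U)"
    using assms by (simp add: scaleR_2)
  finally show ?thesis .
qed

lemma re_zero: "re_mat (A::complex^'n^'n) = 0 \<longleftrightarrow> A + cadj A = 0"
  by (simp add: re_mat_def)

theorem corollary3p2:
  fixes M :: "(complex ^ 'm ^ 'm) set"
    and \<phi> :: "complex ^ 'm ^ 'm \<Rightarrow> complex ^ 'n ^ 'n"
  assumes "subspace M"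
    and "\<And>A B. A \<in> M \<Longrightarrow> B \<in> M \<Longrightarrow> \<phi> (A + B) = \<phi> A + \<phi> B"
    and "\<And>c A. A \<in> M \<Longrightarrow> \<phi> (c *\<^sub>R A) = c *\<^sub>R \<phi> A"
    and "\<And>U. U \<in> M \<Longrightarrow> unitary_mat U \<Longrightarrow> unitary_mat (\<phi> U)"
  shows "\<forall>U \<in> M. \<forall>V \<in> M. unitary_mat U \<longrightarrow> unitary_mat V \<longrightarrow>
           re_mat (cadj U ** V) = 0 \<longrightarrow> re_mat (cadj (\<phi> U) ** \<phi> V) = 0"
proof (intro ballI impI)
  fix U V assume UM: "U \<in> M" and VM: "V \<in> M" and uU: "unitary_mat U" and uV: "unitary_mat V"
    and re: "re_mat (cadj U ** V) = 0"
  define s where "s = inverse (sqrt 2)"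
  have s2: "s * s = 1/2" unfolding s_def
    by (simp flip: inverse_mult_distrib add: inverse_eq_divide)
  have h1: "cadj U ** V + cadj V ** U = 0"
    using re by (simp add: re_zero cadj_mult cadj_cadj)
  have h2: "U ** cadj V + V ** cadj U = 0"
  proof -
    have "U ** (cadj U ** V + cadj V ** U) ** cadj U = 0" using h1 by simp
    hence "(U ** cadj U) ** V ** cadj U + U ** cadj V ** (U ** cadj U) = 0"
      by (simp add: matrix_add_ldistrib matrix_add_rdistrib matrix_mul_assoc)
    thus ?thesis using uU by (simp add: unitary_mat_def add.commute)
  qed
  define W where "W = s *\<^sub>R (U + V)"
  have WM: "W \<in> M" unfolding W_def using assms(1) UM VM
    by (simp add: subspace_add subspace_scale)
  have uW: "unitary_mat W"
  proof -
    have a: "cadj (U + V) ** (U + V) = (2::real) *\<^sub>R mat 1"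
      using key[of U V] uU uV h1 by (simp add: unitary_mat_def)
    have b: "cadj (cadj (U + V)) ** cadj (U + V) = (2::real) *\<^sub>R mat 1"
      using key[of "cadj U" "cadj V"] uU uV h2
      by (simp add: unitary_mat_def cadj_cadj cadj_add)
    have c: "s *\<^sub>R s *\<^sub>R ((2::real) *\<^sub>R (mat 1 :: complex^'m^'m)) = mat 1"
    proof -
      have "s * (s * 2) = 1" using s2 by simp
      thus ?thesis by simp
    qed
    show ?thesis using a b c unfolding W_def unitary_mat_def
      by (simp add: cadj_scaleR scaleR_mult_left scaleR_mult_right cadj_cadj)
  qed
  have pW: "\<phi> W = s *\<^sub>R (\<phi> U + \<phi> V)"
    unfolding W_def using assms(1) UM VM assms(2,3) by (simp add: subspace_add)
  have uPU: "cadj (\<phi> U) ** \<phi> U = mat 1" and uPV: "cadj (\<phi> V) ** \<phi> V = mat 1"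
    using assms(4) UM VM uU uV unitary_mat_def by blast+
  have "cadj (\<phi> W) ** \<phi> W = mat 1" using assms(4)[OF WM uW] unitary_mat_def by blast
  hence "(s * s) *\<^sub>R ((2::real) *\<^sub>R mat 1 + (cadj (\<phi> U) ** \<phi> V + cadj (\<phi> V) ** \<phi> U)) = mat 1"
    using key[OF uPU uPV] pW by (simp add: cadj_scaleR scaleR_mult_left scaleR_mult_right)
  hence "(1/2::real) *\<^sub>R ((2::real) *\<^sub>R mat 1 + (cadj (\<phi> U) ** \<phi> V + cadj (\<phi> V) ** \<phi> U)) = mat 1"
    using s2 by simp
  hence "cadj (\<phi> U) ** \<phi> V + cadj (\<phi> V) ** \<phi> U = 0"
  proof -
    define X where "X = cadj (\<phi> U) ** \<phi> V + cadj (\<phi> V) ** \<phi> U"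
    assume "(1/2::real) *\<^sub>R ((2::real) *\<^sub>R mat 1 + (cadj (\<phi> U) ** \<phi> V + cadj (\<phi> V) ** \<phi> U)) = mat 1"
    hence "(1/2::real) *\<^sub>R ((2::real) *\<^sub>R mat 1 + X) = mat 1" unfolding X_def .
    hence "(1/2::real) *\<^sub>R X = 0" by (simp add: scaleR_add_right)
    thus ?thesis unfolding X_def by simp
  qed
  thus "re_mat (cadj (\<phi> U) ** \<phi> V) = 0"
    by (simp add: re_zero cadj_mult cadj_cadj)
qed

end
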